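(* Let $\delta$ be a classifier and $t\ge 0$. If $\delta$ is not null, then for each $\beta\in\{0,1\}$ the conditional payoff $V_\beta(r)$ is strictly quasiconcave in $r\in\mathbb{R}$ and attains its maximum at some (finite) $r\in\mathbb{R}$. If $\delta$ is null, every individual is indifferent among all reward levels $r$.
   Context: Individuals have privately known costs $\gamma_i\in\mathbb{R}$ of choosing $\beta_i=1$ (compliance) rather than $\beta_i=0$, distributed according to a continuously differentiable CDF $F$ with log-concave density $f$ of full support on $\mathbb{R}$. A classifier $\delta=(\delta_1,\delta_0)\in[0,1]^2$ assigns $d_i\in\{0,1\}$ with $\Pr[d_i=s_i\mid s_i]=\delta_{s_i}$, where the signal satisfies $\Pr[s_i=\beta_i]=\phi\in(\tfrac12,1]$. Let $\rho=\rho(\delta,\phi)=(\delta_1+\delta_0-1)(2\phi-1)$; $\delta$ is null if $\rho=0$. Individuals with $d_i=1$ receive reward $r$, rewards are financed by an equal tax on everyone (budget balance), and each individual additionally gets $t\cdot\pi$ where $\pi$ is the population compliance rate; individuals comply iff $\gamma_i\le r\rho$, so $\pi=F(r\rho)$. Individual $i$'s expected payoff from reward $r$, conditional on complying, is $V_1(r)=-\gamma_i+r\rho(1-F(r\rho))+tF(r\rho)$, and conditional on not complying is $V_0(r)=-r\rho F(r\rho)+tF(r\rho)$; an individual's payoff from $r$ is $V_1(r)$ if $\gamma_i\le r\rho$ and $V_0(r)$ otherwise. *)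

theory Defs
  imports "HOL-Analysis.Analysis"
begin

definition cdf_logconcave_density :: "(real \<Rightarrow> real) \<Rightarrow> (real \<Rightarrow> real) \<Rightarrow> bool" where
  "cdf_logconcave_density F f \<longleftrightarrow>
     mono F \<and>
     (F \<longlongrightarrow> 0) at_bot \<and> (F \<longlongrightarrow> 1) at_top \<and>
     (\<forall>x. (F has_real_derivative f x) (at x)) \<and>
     continuous_on UNIV f \<and>
     (\<forall>x. f x > 0) \<and>
     concave_on UNIV (\<lambda>x. ln (f x))"

definition rho :: "real \<Rightarrow> real \<Rightarrow> real \<Rightarrow> real" where
  "rho d1 d0 phi = (d1 + d0 - 1) * (2 * phi - 1)"

text \<open>Conditional payoff from reward r when complying (cost gamma).\<close>
definition V1 :: "(real \<Rightarrow> real) \<Rightarrow> real \<Rightarrow> real \<Rightarrow> real \<Rightarrow> real \<Rightarrow> real" where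
  "V1 F t \<rho> \<gamma> r = - \<gamma> + r * \<rho> * (1 - F (r * \<rho>)) + t * F (r * \<rho>)"

text \<open>Conditional payoff from reward r when not complying.\<close>
definition V0 :: "(real \<Rightarrow> real) \<Rightarrow> real \<Rightarrow> real \<Rightarrow> real \<Rightarrow> real" where
  "V0 F t \<rho> r = - r * \<rho> * F (r * \<rho>) + t * F (r * \<rho>)"

definition payoff :: "(real \<Rightarrow> real) \<Rightarrow> real \<Rightarrow> real \<Rightarrow> real \<Rightarrow> real \<Rightarrow> real" where
  "payoff F t \<rho> \<gamma> r = (if \<gamma> \<le> r * \<rho> then V1 F t \<rho> \<gamma> r else V0 F t \<rho> r)"

definition strictly_quasiconcave :: "(real \<Rightarrow> real) \<Rightarrow> bool" where
  "strictly_quasiconcave g \<longleftrightarrow>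
     (\<forall>x y l. x \<noteq> y \<and> 0 < l \<and> l < 1 \<longrightarrow> g (l * x + (1 - l) * y) > min (g x) (g y))"

end

theory Submission
  imports Defs
begin


lemma logconc_shift:
  fixes f :: "real \<Rightarrow> real"
  assumes pos: "\<And>x. f x > 0" and cc: "concave_on UNIV (\<lambda>x. ln (f x))"
    and sx: "s \<le> x" and d: "d > 0"
  shows "f (x + d) * f s \<le> f (s + d) * f x"
proof (cases "s = x")
  case True then show ?thesis by (simp add: mult.commute)
next
  case False
  with sx have sx': "s < x" by simp
  define g where "g = (\<lambda>x. ln (f x))"
  define lam where "lam = d / (x - s + d)"
  have pp: "x - s + d > 0" using sx' d by simp
  have l0: "0 \<le> lam" "lam \<le> 1" using sx' d by (auto simp: lam_def field_simps)
  have lm: "lam * (x - s + d) = d" using pp by (simp add: lam_def)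
  have e1: "s + d = (1 - lam) * s + lam * (x + d)" using lm
    by (simp add: algebra_simps)
  have e2: "x = (1 - (1 - lam)) * s + (1 - lam) * (x + d)" using lm
    by (simp add: algebra_simps)
  have c1: "g (s + d) \<ge> (1 - lam) * g s + lam * g (x + d)"
    using concave_onD[OF cc[folded g_def], of lam s "x + d"] l0 e1 by simp
  have c2: "g x \<ge> (1 - (1 - lam)) * g s + (1 - lam) * g (x + d)"
    using concave_onD[OF cc[folded g_def], of "1 - lam" s "x + d"] l0 e2 by simp
  have sum: "g s + g (x + d) \<le> g (s + d) + g x"
    using c1 c2 by (simp add: algebra_simps)
  have "ln (f (x + d) * f s) \<le> ln (f (s + d) * f x)"
    using sum pos[of s] pos[of x] pos[of "x+d"] pos[of "s+d"] by (simp add: ln_mult g_def algebra_simps)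
  then show ?thesis using pos by (simp add: ln_le_cancel_iff)
qed

lemma shift_bot: "((\<lambda>s. F (s + d)) \<longlongrightarrow> (L::real)) at_bot" if "(F \<longlongrightarrow> L) at_bot" for F :: "real \<Rightarrow> real"
proof -
  have "filterlim (\<lambda>s::real. d + s) at_bot at_bot"
    using filterlim_tendsto_add_at_bot_iff[of "\<lambda>_. d" d at_bot "\<lambda>x. x"] filterlim_ident by auto
  then have "filterlim (\<lambda>s::real. s + d) at_bot at_bot" by (simp add: add.commute)
  from filterlim_compose[OF that this] show ?thesis by simp
qed

lemma shift_top: "((\<lambda>s. F (s + d)) \<longlongrightarrow> (L::real)) at_top" if "(F \<longlongrightarrow> L) at_top" for F :: "real \<Rightarrow> real"
proof -
  have "filterlim (\<lambda>s::real. d + s) at_top at_top"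
    using filterlim_tendsto_add_at_top[of "\<lambda>_. d" d at_top "\<lambda>x. x"] filterlim_ident by auto
  then have "filterlim (\<lambda>s::real. s + d) at_top at_top" by (simp add: add.commute)
  from filterlim_compose[OF that this] show ?thesis by simp
qed

lemma ratio_lower:
  fixes F f :: "real \<Rightarrow> real"
  assumes pos: "\<And>x. f x > 0" and cc: "concave_on UNIV (\<lambda>x. ln (f x))"
    and der: "\<And>x. (F has_real_derivative f x) (at x)"
    and lim: "(F \<longlongrightarrow> 0) at_bot" and xy: "x < y"
  shows "F x * f y \<le> F y * f x"
proof -
  define d where "d = y - x"
  have d: "d > 0" "x + d = y" using xy by (auto simp: d_def)
  define phi where "phi = (\<lambda>s. F (s + d) * f x - f y * F s)"
  have dphi: "(phi has_real_derivative (f (s + d) * f x - f y * f s)) (at s)" for s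
    unfolding phi_def
    using DERIV_shift[of F "f (s + d)" s d] der[of "s + d"]
    by (auto intro!: derivative_eq_intros der)
  have mono: "phi s \<le> phi x" if "s \<le> x" for s
  proof (rule DERIV_nonneg_imp_nondecreasing[OF that])
    fix z assume "s \<le> z" "z \<le> x"
    have "f (z + d) * f x - f y * f z \<ge> 0"
      using logconc_shift[OF pos cc \<open>z \<le> x\<close> d(1)] d(2) by (simp add: mult.commute)
    then show "\<exists>y. DERIV phi z :> y \<and> y \<ge> 0" using dphi by blast
  qed
  have "(phi \<longlongrightarrow> 0 * f x - f y * 0) at_bot"
    unfolding phi_def by (intro tendsto_intros shift_bot lim)
  then have l0: "(phi \<longlongrightarrow> 0) at_bot" by simp
  have ev: "eventually (\<lambda>s. phi s \<le> phi x) at_bot"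
    by (auto simp: eventually_at_bot_linorder intro!: exI[of _ x] mono)
  have "0 \<le> phi x" using tendsto_upperbound[OF l0 ev] by simp
  then show ?thesis using d(2) by (simp add: phi_def mult.commute)
qed

lemma ratio_upper:
  fixes F f :: "real \<Rightarrow> real"
  assumes pos: "\<And>x. f x > 0" and cc: "concave_on UNIV (\<lambda>x. ln (f x))"
    and der: "\<And>x. (F has_real_derivative f x) (at x)"
    and lim: "(F \<longlongrightarrow> 1) at_top" and xy: "x < y"
  shows "f x * (1 - F y) \<le> f y * (1 - F x)"
proof -
  define d where "d = y - x"
  have d: "d > 0" "x + d = y" using xy by (auto simp: d_def)
  define psi where "psi = (\<lambda>s. f y * (1 - F s) - f x * (1 - F (s + d)))"
  have dpsi: "(psi has_real_derivative (f x * f (s + d) - f y * f s)) (at s)" for s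
    unfolding psi_def
    using DERIV_shift[of F "f (s + d)" s d] der[of "s + d"]
    by (auto intro!: derivative_eq_intros der)
  have mono: "psi s \<le> psi x" if "x \<le> s" for s
  proof (rule DERIV_nonpos_imp_nonincreasing[OF that])
    fix z assume "x \<le> z" "z \<le> s"
    have "f x * f (z + d) - f y * f z \<le> 0"
      using logconc_shift[OF pos cc \<open>x \<le> z\<close> d(1)] d(2) by (simp add: mult.commute)
    then show "\<exists>y. DERIV psi z :> y \<and> y \<le> 0" using dpsi by blast
  qed
  have "(psi \<longlongrightarrow> f y * (1 - 1) - f x * (1 - 1)) at_top"
    unfolding psi_def by (intro tendsto_intros shift_top lim)
  then have l0: "(psi \<longlongrightarrow> 0) at_top" by simp
  have ev: "eventually (\<lambda>s. psi s \<le> psi x) at_top"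
    by (auto simp: eventually_at_top_linorder intro!: exI[of _ x] mono)
  have "0 \<le> psi x" using tendsto_upperbound[OF l0 ev] by simp
  then show ?thesis using d(2) by (simp add: psi_def)
qed


lemma unimodal:
  fixes G D :: "real \<Rightarrow> real"
  assumes der: "\<And>x. (G has_real_derivative D x) (at x)"
    and up: "\<And>x. x < c \<Longrightarrow> D x > 0" and down: "\<And>x. x > c \<Longrightarrow> D x < 0"
  shows "strictly_quasiconcave G \<and> (\<forall>r. G r \<le> G c)"
proof -
  have inc: "G a < G b" if "a < b" "b \<le> c" for a b
  proof -
    obtain z where z: "a < z" "z < b" "G b - G a = (b - a) * D z"
      using MVT2[OF \<open>a < b\<close>, of G D] der by blast
    have "D z > 0" using z that up by auto
    moreover have "b - a > 0" using that by simp
    ultimately have "(b - a) * D z > 0" by (rule mult_pos_pos[rotated])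
    then show ?thesis using z by linarith
  qed
  have dec: "G b < G a" if "a < b" "c \<le> a" for a b
  proof -
    obtain z where z: "a < z" "z < b" "G b - G a = (b - a) * D z"
      using MVT2[OF \<open>a < b\<close>, of G D] der by blast
    have "D z < 0" using z that down by auto
    moreover have "b - a > 0" using that by simp
    ultimately have "(b - a) * D z < 0" by (simp add: mult_pos_neg)
    then show ?thesis using z by linarith
  qed
  have le: "G r \<le> G c" for r
    using inc[of r c] dec[of c r] by (cases r c rule: linorder_cases) auto
  have sq: "G (l * x + (1 - l) * y) > min (G x) (G y)" if "x \<noteq> y" "0 < l" "l < 1" for x y l
  proof -
    define z where "z = l * x + (1 - l) * y"
    have b1: "min x y < z" "z < max x y"
    proof -
      have "min x y < z \<and> z < max x y"
      proof (cases "x < y")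
        case True
        have e: "z - x = (1 - l) * (y - x)" "y - z = l * (y - x)" unfolding z_def by (simp_all add: algebra_simps)
        have "(1 - l) * (y - x) > 0" "l * (y - x) > 0" using True that by simp_all
        then show ?thesis using True e by (simp add: min_def max_def)
      next
        case False
        then have F: "y < x" using that by simp
        have e: "z - y = l * (x - y)" "x - z = (1 - l) * (x - y)" unfolding z_def by (simp_all add: algebra_simps)
        have "(1 - l) * (x - y) > 0" "l * (x - y) > 0" using F that by simp_all
        then show ?thesis using F e by (simp add: min_def max_def)
      qed
      then show "min x y < z" "z < max x y" by auto
    qed
    show ?thesis
    proof (cases "z \<le> c")
      case True
      then have "G (min x y) < G z" using inc b1 by blast
      then show ?thesis unfolding z_def by (cases "x \<le> y") (auto simp: min_def max_def split: if_splits)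
    next
      case False
      then have "G (max x y) < G z" using dec b1 by (meson less_le_not_le nle_le)
      then show ?thesis unfolding z_def by (cases "x \<le> y") (auto simp: min_def max_def split: if_splits)
    qed
  qed
  show ?thesis using le sq unfolding strictly_quasiconcave_def by blast
qed

lemma sq_linear:
  assumes "strictly_quasiconcave G" "(p::real) \<noteq> 0"
  shows "strictly_quasiconcave (\<lambda>r. k + G (r * p))"
  unfolding strictly_quasiconcave_def
proof (intro allI impI)
  fix x y l :: real assume h: "x \<noteq> y \<and> 0 < l \<and> l < 1"
  have "x * p \<noteq> y * p" using h assms(2) by simp
  then have "G (l * (x * p) + (1 - l) * (y * p)) > min (G (x * p)) (G (y * p))"
    using assms(1) h unfolding strictly_quasiconcave_def by blast
  moreover have "(l * x + (1 - l) * y) * p = l * (x * p) + (1 - l) * (y * p)" by (simp add: algebra_simps)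
  ultimately show "k + G ((l * x + (1 - l) * y) * p) > min (k + G (x * p)) (k + G (y * p))"
    by (auto simp: min_def split: if_splits)
qed



theorem proposition5:
  fixes F f :: "real \<Rightarrow> real" and d1 d0 phi t :: real
  assumes F: "cdf_logconcave_density F f"
    and d1: "0 \<le> d1" "d1 \<le> 1" and d0: "0 \<le> d0" "d0 \<le> 1"
    and phi: "1/2 < phi" "phi \<le> 1"
    and t: "t \<ge> 0"
  shows "(rho d1 d0 phi \<noteq> 0 \<longrightarrow>
           (\<forall>\<gamma>. strictly_quasiconcave (V1 F t (rho d1 d0 phi) \<gamma>) \<and>
                 (\<exists>r. \<forall>r'. V1 F t (rho d1 d0 phi) \<gamma> r' \<le> V1 F t (rho d1 d0 phi) \<gamma> r)) \<and>
           strictly_quasiconcave (V0 F t (rho d1 d0 phi)) \<and>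
           (\<exists>r. \<forall>r'. V0 F t (rho d1 d0 phi) r' \<le> V0 F t (rho d1 d0 phi) r))
       \<and> (rho d1 d0 phi = 0 \<longrightarrow>
           (\<forall>\<gamma> r r'. payoff F t (rho d1 d0 phi) \<gamma> r = payoff F t (rho d1 d0 phi) \<gamma> r'))"
proof -
  from F have Fmono: "mono F" and lb: "(F \<longlongrightarrow> 0) at_bot" and lt: "(F \<longlongrightarrow> 1) at_top"
    and der: "\<And>x. (F has_real_derivative f x) (at x)" and fc: "continuous_on UNIV f"
    and pos: "\<And>x. f x > 0" and cc: "concave_on UNIV (\<lambda>x. ln (f x))"
    unfolding cdf_logconcave_density_def by auto
  have Fc: "isCont F x" for x using der DERIV_isCont by blast
  have fcx: "isCont f x" for x using fc by (simp add: continuous_on_eq_continuous_at)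
  have fnz: "f x \<noteq> 0" for x using pos[of x] by simp
  define R where "R = (\<lambda>x. (1 - F x) / f x)"
  define Q where "Q = (\<lambda>x. F x / f x)"
  have Ranti: "R y \<le> R x" if "x \<le> y" for x y
  proof (cases "x = y")
    case False
    then have "f x * (1 - F y) \<le> f y * (1 - F x)" using ratio_upper[OF pos cc der lt] that by simp
    then show ?thesis unfolding R_def using pos[of x] pos[of y]
      by (simp add: divide_simps mult.commute)
  qed simp
  have Qmono: "Q x \<le> Q y" if "x \<le> y" for x y
  proof (cases "x = y")
    case False
    then have "F x * f y \<le> F y * f x" using ratio_lower[OF pos cc der lb] that by simp
    then show ?thesis unfolding Q_def using pos[of x] pos[of y]
      by (simp add: divide_simps mult.commute)
  qed simp
  define k where "k = (\<lambda>x. R x - (x - t))"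
  define j where "j = (\<lambda>x. (t - x) - Q x)"
  have kc: "continuous_on A k" for A unfolding k_def R_def
    using pos by (intro continuous_at_imp_continuous_on ballI) (auto intro!: continuous_intros Fc fcx simp: fnz)
  have jc: "continuous_on A j" for A unfolding j_def Q_def
    using pos by (intro continuous_at_imp_continuous_on ballI) (auto intro!: continuous_intros Fc fcx simp: fnz)
  obtain c where c: "k c = 0"
  proof -
    define a where "a = t - \<bar>R t\<bar> - 1"
    define b where "b = t + \<bar>R t\<bar> + 1"
    have "k a \<ge> 0" using Ranti[of a t] unfolding k_def a_def by (simp; linarith)
    moreover have "k b \<le> 0" using Ranti[of t b] unfolding k_def b_def by (simp; linarith)
    moreover have "a \<le> b" unfolding a_def b_def by simp
    ultimately show ?thesis using IVT2'[of k b 0 a] kc that by blast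
  qed
  obtain c' where c': "j c' = 0"
  proof -
    define a where "a = t - \<bar>Q t\<bar> - 1"
    define b where "b = t + \<bar>Q t\<bar> + 1"
    have "j a \<ge> 0" using Qmono[of a t] unfolding j_def a_def by (simp; linarith)
    moreover have "j b \<le> 0" using Qmono[of t b] unfolding j_def b_def by (simp; linarith)
    moreover have "a \<le> b" unfolding a_def b_def by simp
    ultimately show ?thesis using IVT2'[of j b 0 a] jc that by blast
  qed
  have kpos: "k x > 0" if "x < c" for x using Ranti[of x c] that c unfolding k_def by simp
  have kneg: "k x < 0" if "x > c" for x using Ranti[of c x] that c unfolding k_def by simp
  have jpos: "j x > 0" if "x < c'" for x using Qmono[of x c'] that c' unfolding j_def by simp
  have jneg: "j x < 0" if "x > c'" for x using Qmono[of c' x] that c' unfolding j_def by simp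
  define g where "g = (\<lambda>x. x * (1 - F x) + t * F x)"
  define h where "h = (\<lambda>x. - x * F x + t * F x)"
  have dg: "(g has_real_derivative f x * k x) (at x)" for x
  proof -
    have "(g has_real_derivative (1 * (1 - F x) + x * (0 - f x) + t * f x)) (at x)"
      unfolding g_def by (auto intro!: derivative_eq_intros der)
    moreover have "1 * (1 - F x) + x * (0 - f x) + t * f x = f x * k x"
      unfolding k_def R_def using pos[of x] by (simp add: field_simps)
    ultimately show ?thesis by simp
  qed
  have dh: "(h has_real_derivative f x * j x) (at x)" for x
  proof -
    have "(h has_real_derivative (- 1 * F x + - x * f x + t * f x)) (at x)"
      unfolding h_def by (auto intro!: derivative_eq_intros der)
    moreover have "- 1 * F x + - x * f x + t * f x = f x * j x"
      unfolding j_def Q_def using pos[of x] by (simp add: field_simps)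
    ultimately show ?thesis by simp
  qed
  have ug: "strictly_quasiconcave g \<and> (\<forall>r. g r \<le> g c)"
    by (rule unimodal[OF dg]) (auto intro: mult_pos_pos mult_pos_neg pos kpos kneg)
  have uh: "strictly_quasiconcave h \<and> (\<forall>r. h r \<le> h c')"
    by (rule unimodal[OF dh]) (auto intro: mult_pos_pos mult_pos_neg pos jpos jneg)
  define p where "p = rho d1 d0 phi"
  have V1eq: "V1 F t p \<gamma> = (\<lambda>r. - \<gamma> + g (r * p))" for \<gamma>
    by (rule ext) (simp add: V1_def g_def)
  have V0eq: "V0 F t p = (\<lambda>r. 0 + h (r * p))"
    by (rule ext) (simp add: V0_def h_def)
  have part1: "p \<noteq> 0 \<longrightarrow>
           (\<forall>\<gamma>. strictly_quasiconcave (V1 F t p \<gamma>) \<and>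
                 (\<exists>r. \<forall>r'. V1 F t p \<gamma> r' \<le> V1 F t p \<gamma> r)) \<and>
           strictly_quasiconcave (V0 F t p) \<and>
           (\<exists>r. \<forall>r'. V0 F t p r' \<le> V0 F t p r)"
  proof
    assume p0: "p \<noteq> 0"
    have A: "strictly_quasiconcave (V1 F t p \<gamma>)" for \<gamma>
      unfolding V1eq using sq_linear ug p0 by blast
    have B: "\<exists>r. \<forall>r'. V1 F t p \<gamma> r' \<le> V1 F t p \<gamma> r" for \<gamma>
      unfolding V1eq using ug p0 by (intro exI[of _ "c / p"]) simp
    have C: "strictly_quasiconcave (V0 F t p)"
      unfolding V0eq using sq_linear uh p0 by blast
    have D: "\<exists>r. \<forall>r'. V0 F t p r' \<le> V0 F t p r"
      unfolding V0eq using uh p0 by (intro exI[of _ "c' / p"]) simp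
    show "(\<forall>\<gamma>. strictly_quasiconcave (V1 F t p \<gamma>) \<and>
                 (\<exists>r. \<forall>r'. V1 F t p \<gamma> r' \<le> V1 F t p \<gamma> r)) \<and>
           strictly_quasiconcave (V0 F t p) \<and>
           (\<exists>r. \<forall>r'. V0 F t p r' \<le> V0 F t p r)" using A B C D by blast
  qed
  have part2: "p = 0 \<longrightarrow> (\<forall>\<gamma> r r'. payoff F t p \<gamma> r = payoff F t p \<gamma> r')"
    by (simp add: payoff_def V1_def V0_def)
  show ?thesis using part1 part2 unfolding p_def by blast
qed

end
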